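(* Let $J:[0,\infty)\to\mathbb R$ be a concave, nondecreasing function with $J(0)=0$. Let $r\in(0,2)$ and $A,B>0$, and suppose $z>0$ satisfies $z^2\le A^2+B^2J(z^r)$. Then $$J(z)\le C\,J(A)\Bigl[1+J(A^r)\Bigl(\frac BA\Bigr)^2\Bigr]^{1/(2-r)},$$ where $C$ is a constant depending only on $r$. *)

theory Defs
  imports "HOL-Analysis.Analysis"
begin

end

theory Submission
  imports Defs
begin

lemma conc_scale:
  fixes J :: "real \<Rightarrow> real"
  assumes c: "concave_on {0..} J" and j0: "J 0 = 0" and a: "0 < a" "a \<le> b"
  shows "J b \<le> (b / a) * J a"
proof -
  have b: "b > 0" using a by linarith
  have "J ((1 - a/b) *\<^sub>R 0 + (a/b) *\<^sub>R b) \<ge> (1 - a/b) * J 0 + (a/b) * J b"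
    by (rule concave_onD[OF c]) (use a b in auto)
  hence "J a \<ge> (a/b) * J b" using b j0 by simp
  hence "(b/a) * J a \<ge> (b/a) * ((a/b) * J b)" using a b by (intro mult_left_mono) auto
  thus ?thesis using a b by simp
qed

theorem lemma2p2:
  fixes r :: real
  assumes "0 < r" "r < 2"
  shows "\<exists>C > 0. \<forall>(J :: real \<Rightarrow> real) A B z.
           concave_on {0..} J \<longrightarrow> mono_on {0..} J \<longrightarrow> J 0 = 0 \<longrightarrow>
           A > 0 \<longrightarrow> B > 0 \<longrightarrow> z > 0 \<longrightarrow>
           z\<^sup>2 \<le> A\<^sup>2 + B\<^sup>2 * J (z powr r) \<longrightarrow>
           J z \<le> C * J A * (1 + J (A powr r) * (B / A)\<^sup>2) powr (1 / (2 - r))"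
proof (rule exI[of _ 1], intro conjI allI impI)
  fix J :: "real \<Rightarrow> real" and A B z :: real
  assume c: "concave_on {0..} J" and m: "mono_on {0..} J" and j0: "J 0 = 0"
    and A: "A > 0" and B: "B > 0" and z: "z > 0"
    and h: "z\<^sup>2 \<le> A\<^sup>2 + B\<^sup>2 * J (z powr r)"
  have nn: "\<And>x. x \<ge> 0 \<Longrightarrow> J x \<ge> 0"
    using m j0 by (metis atLeast_iff mono_onD order_refl)
  define X where "X = J (A powr r) * (B / A)\<^sup>2"
  have X0: "X \<ge> 0" unfolding X_def using nn by simp
  have JA: "J A \<ge> 0" using nn A by simp
  have P1: "(1 + X) powr (1 / (2 - r)) \<ge> 1"
    using X0 assms by (intro ge_one_powr_ge_zero) auto
  show "J z \<le> 1 * J A * (1 + X) powr (1 / (2 - r))"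
  proof (cases "z \<le> A")
    case True
    have "J z \<le> J A" using m True z by (intro mono_onD[OF m]) auto
    also have "\<dots> \<le> J A * (1 + X) powr (1 / (2 - r))"
      using JA P1 by (simp add: mult_le_cancel_left1)
    finally show ?thesis by simp
  next
    case False
    define t where "t = z / A"
    have t1: "t > 1" using False A unfolding t_def by simp
    have zt: "z = t * A" using A unfolding t_def by simp
    have Ar: "A powr r > 0" using A by simp
    have "A powr r \<le> z powr r" using False A assms by (intro powr_mono2) auto
    hence "J (z powr r) \<le> (z powr r / A powr r) * J (A powr r)"
      using conc_scale[OF c j0 Ar] by simp
    also have "z powr r / A powr r = t powr r"
      unfolding t_def using A z by (simp add: powr_divide)
    finally have Jzr: "J (z powr r) \<le> t powr r * J (A powr r)" .
    have z2: "z\<^sup>2 \<le> A\<^sup>2 + B\<^sup>2 * (t powr r * J (A powr r))"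
      using h Jzr by (smt (verit) mult_left_mono zero_le_power2)
    have "t\<^sup>2 * A\<^sup>2 \<le> A\<^sup>2 * (1 + t powr r * X)"
    proof -
      have e: "A\<^sup>2 * (1 + t powr r * X) = A\<^sup>2 + B\<^sup>2 * (t powr r * J (A powr r))"
        unfolding X_def using A by (simp add: power_divide field_simps)
      show ?thesis using z2 e unfolding zt by (simp add: power_mult_distrib mult.commute)
    qed
    hence "t\<^sup>2 \<le> 1 + t powr r * X" using A by simp
    also have "\<dots> \<le> t powr r + t powr r * X"
      using t1 assms by (simp add: ge_one_powr_ge_zero)
    finally have "t powr 2 \<le> t powr r * (1 + X)"
      using t1 by (simp add: powr_numeral algebra_simps)
    hence "t powr (2 - r) \<le> 1 + X"
      using t1 by (simp add: powr_diff divide_le_eq mult.commute)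
    hence "(t powr (2 - r)) powr (1 / (2 - r)) \<le> (1 + X) powr (1 / (2 - r))"
      using t1 assms by (intro powr_mono2) auto
    hence tle: "t \<le> (1 + X) powr (1 / (2 - r))"
      using t1 assms by (simp add: powr_powr)
    have "J z \<le> (z / A) * J A" using conc_scale[OF c j0 A] False by simp
    also have "\<dots> = t * J A" unfolding t_def ..
    also have "\<dots> \<le> (1 + X) powr (1 / (2 - r)) * J A"
      using tle JA by (intro mult_right_mono) auto
    finally show ?thesis by (simp add: mult.commute)
  qed
qed simp

end
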